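(* Let $(Q',\mathbf z')$ and $(Q'',\mathbf z'')$ be labeled CAT(0) planar graphs with $\mathbf z'=(z'_1,\dots,z'_n)$, $\mathbf z''=(z''_1,\dots,z''_n)$. Suppose a vertex $v'\in V(Q')$ satisfies $z'_i=v'$ for all $i$ in the cyclic interval $[p,q]$, and a vertex $v''\in V(Q'')$ satisfies $z''_i=v''$ for all $i$ in the cyclic interval $[r,s]$, where $[p,q]$ and $[r,s]$ are proper cyclic intervals with $[p,q]\cup[r,s]=[n]$. Let $Q$ be obtained from $Q'$ and $Q''$ by identifying $v'$ with $v''$, with labels $z_i=z'_i$ for $i\in[r,s]$ and $z_i=z''_i$ for $i\in[p,q]$. Then $\pi_\bullet(Q)=\pi_\bullet(Q')+\pi_\bullet(Q'')$.
   Context: A CAT(0) planar graph is a nonempty connected finite directed plane graph whose interior faces are triangles with edges forming directed 3-cycles, whose interior vertices have degree at least 6, and in which every edge and vertex lies on the perimeter of some face; labeled means equipped with $\mathbf z\in V(Q)^n$ (not necessarily distinct). Directed distance $\delta$: minimal walk cost, 1 along and 2 against an edge orientation. The tropical Plücker vector of a labeled graph is $\pi_I=-\frac13\min_{x\in V(Q)}\sum_{i\in I}\delta(x,z_i)$ for $I\in\binom{[n]}3$. A cyclic interval is $\{a,a+1,\dots,b\}$ modulo $n$. *)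

theory Defs
  imports "HOL-Analysis.Analysis"
begin

text \<open>A directed graph is given by a vertex set V and a set of directed edges
E \<subseteq> V \<times> V (at most one edge per ordered pair).\<close>

definition plane_embedding ::
  "'v set \<Rightarrow> ('v \<times> 'v) set \<Rightarrow> ('v \<Rightarrow> complex) \<Rightarrow> ('v \<times> 'v \<Rightarrow> real \<Rightarrow> complex) \<Rightarrow> bool" where
  "plane_embedding V E pos gam \<longleftrightarrow>
     inj_on pos V \<and>
     (\<forall>e\<in>E. arc (gam e) \<and> pathstart (gam e) = pos (fst e) \<and> pathfinish (gam e) = pos (snd e)) \<and>
     (\<forall>e\<in>E. \<forall>v\<in>V. pos v \<in> path_image (gam e) \<longrightarrow> v = fst e \<or> v = snd e) \<and>
     (\<forall>e\<in>E. \<forall>e'\<in>E. e \<noteq> e' \<longrightarrow>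
        path_image (gam e) \<inter> path_image (gam e') \<subseteq> pos ` ({fst e, snd e} \<inter> {fst e', snd e'}))"

definition drawing ::
  "'v set \<Rightarrow> ('v \<times> 'v) set \<Rightarrow> ('v \<Rightarrow> complex) \<Rightarrow> ('v \<times> 'v \<Rightarrow> real \<Rightarrow> complex) \<Rightarrow> complex set" where
  "drawing V E pos gam = pos ` V \<union> (\<Union>e\<in>E. path_image (gam e))"

definition faces ::
  "'v set \<Rightarrow> ('v \<times> 'v) set \<Rightarrow> ('v \<Rightarrow> complex) \<Rightarrow> ('v \<times> 'v \<Rightarrow> real \<Rightarrow> complex) \<Rightarrow> complex set set" where
  "faces V E pos gam = components (- drawing V E pos gam)"

definition interior_vertex ::
  "'v set \<Rightarrow> ('v \<times> 'v) set \<Rightarrow> ('v \<Rightarrow> complex) \<Rightarrow> ('v \<times> 'v \<Rightarrow> real \<Rightarrow> complex) \<Rightarrow> 'v \<Rightarrow> bool" where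
  "interior_vertex V E pos gam v \<longleftrightarrow>
     v \<in> V \<and> (\<forall>F\<in>faces V E pos gam. \<not> bounded F \<longrightarrow> pos v \<notin> frontier F)"

definition degree :: "('v \<times> 'v) set \<Rightarrow> 'v \<Rightarrow> nat" where
  "degree E v = card {e\<in>E. fst e = v \<or> snd e = v}"

definition graph_connected :: "'v set \<Rightarrow> ('v \<times> 'v) set \<Rightarrow> bool" where
  "graph_connected V E \<longleftrightarrow> (\<forall>x\<in>V. \<forall>y\<in>V. (x, y) \<in> (E \<union> E\<inverse>)\<^sup>*)"

definition cat0_plane_graph ::
  "'v set \<Rightarrow> ('v \<times> 'v) set \<Rightarrow> ('v \<Rightarrow> complex) \<Rightarrow> ('v \<times> 'v \<Rightarrow> real \<Rightarrow> complex) \<Rightarrow> bool" where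
  "cat0_plane_graph V E pos gam \<longleftrightarrow>
     V \<noteq> {} \<and> finite V \<and> E \<subseteq> V \<times> V \<and> graph_connected V E \<and>
     plane_embedding V E pos gam \<and>
     \<comment> \<open>interior faces are triangles whose edges form a directed 3-cycle\<close>
     (\<forall>F\<in>faces V E pos gam. bounded F \<longrightarrow>
        (\<exists>a b c. distinct [a, b, c] \<and> (a, b) \<in> E \<and> (b, c) \<in> E \<and> (c, a) \<in> E \<and>
           frontier F = path_image (gam (a, b)) \<union> path_image (gam (b, c)) \<union> path_image (gam (c, a)))) \<and>
     \<comment> \<open>interior vertices have degree at least 6\<close>
     (\<forall>v\<in>V. interior_vertex V E pos gam v \<longrightarrow> degree E v \<ge> 6) \<and>
     \<comment> \<open>every vertex and every edge lies on the perimeter of some (interior) face\<close>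
     (\<forall>v\<in>V. \<exists>F\<in>faces V E pos gam. bounded F \<and> pos v \<in> frontier F) \<and>
     (\<forall>e\<in>E. \<exists>F\<in>faces V E pos gam. bounded F \<and> path_image (gam e) \<subseteq> frontier F)"

definition cat0_planar_graph :: "'v set \<Rightarrow> ('v \<times> 'v) set \<Rightarrow> bool" where
  "cat0_planar_graph V E \<longleftrightarrow> (\<exists>pos gam. cat0_plane_graph V E pos gam)"

inductive walk_cost :: "('v \<times> 'v) set \<Rightarrow> 'v \<Rightarrow> 'v \<Rightarrow> nat \<Rightarrow> bool" for E where
  nil: "walk_cost E x x 0"
| fwd: "(x, y) \<in> E \<Longrightarrow> walk_cost E y w c \<Longrightarrow> walk_cost E x w (c + 1)"
| bwd: "(y, x) \<in> E \<Longrightarrow> walk_cost E y w c \<Longrightarrow> walk_cost E x w (c + 2)"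

definition ddist :: "('v \<times> 'v) set \<Rightarrow> 'v \<Rightarrow> 'v \<Rightarrow> nat" where
  "ddist E x y = (LEAST c. walk_cost E x y c)"

definition trop_pluecker :: "'v set \<Rightarrow> ('v \<times> 'v) set \<Rightarrow> (nat \<Rightarrow> 'v) \<Rightarrow> nat set \<Rightarrow> real" where
  "trop_pluecker V E z I = - (1/3) * Min ((\<lambda>x. real (\<Sum>i\<in>I. ddist E x (z i))) ` V)"

definition cyc_interval :: "nat \<Rightarrow> nat \<Rightarrow> nat \<Rightarrow> nat set" where
  "cyc_interval n a b = (if a \<le> b then {a..b} else {a..n} \<union> {1..b})"

definition proper_cyc_interval :: "nat \<Rightarrow> nat \<Rightarrow> nat \<Rightarrow> bool" where
  "proper_cyc_interval n a b \<longleftrightarrow> a \<in> {1..n} \<and> b \<in> {1..n} \<and> cyc_interval n a b \<noteq> {1..n}"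

text \<open>Gluing two graphs by identifying v' (in the first) with v'' (in the second).
Vertices of the second graph other than v'' become Inr; v'' becomes Inl v'.\<close>

definition glue_map :: "'a \<Rightarrow> 'b \<Rightarrow> 'b \<Rightarrow> 'a + 'b" where
  "glue_map v' v'' y = (if y = v'' then Inl v' else Inr y)"

definition glue_V :: "'a set \<Rightarrow> 'b set \<Rightarrow> 'b \<Rightarrow> ('a + 'b) set" where
  "glue_V V' V'' v'' = Inl ` V' \<union> Inr ` (V'' - {v''})"

definition glue_E :: "('a \<times> 'a) set \<Rightarrow> ('b \<times> 'b) set \<Rightarrow> 'a \<Rightarrow> 'b \<Rightarrow> (('a + 'b) \<times> ('a + 'b)) set" where
  "glue_E E' E'' v' v'' =
     (\<lambda>(a, b). (Inl a, Inl b)) ` E' \<union> (\<lambda>(a, b). (glue_map v' v'' a, glue_map v' v'' b)) ` E''"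

end

theory Submission
  imports Defs
begin

lemma walk_append: "walk_cost E x y c \<Longrightarrow> walk_cost E y z d \<Longrightarrow> walk_cost E x z (c + d)"
proof (induction rule: walk_cost.induct)
  case (nil x) then show ?case by simp
next
  case (fwd x y w c)
  then have "walk_cost E x z (c + d + 1)" by (intro walk_cost.fwd) auto
  then show ?case by (simp add: algebra_simps)
next
  case (bwd y x w c)
  then have "walk_cost E x z (c + d + 2)" by (intro walk_cost.bwd) auto
  then show ?case by (simp add: algebra_simps)
qed

lemma walk_edge_fwd: "(x, y) \<in> E \<Longrightarrow> walk_cost E x y 1"
  using walk_cost.fwd[OF _ walk_cost.nil, of x y E] by simp

lemma walk_edge_bwd: "(y, x) \<in> E \<Longrightarrow> walk_cost E x y 2"
  using walk_cost.bwd[OF _ walk_cost.nil, of y x E] by (simp add: numeral_2_eq_2)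

lemma walk_rev: "walk_cost E x y c \<Longrightarrow> \<exists>c'. walk_cost E y x c' \<and> c' \<le> 2 * c"
proof (induction rule: walk_cost.induct)
  case (nil x) show ?case by (rule exI[of _ 0]) (simp add: walk_cost.nil)
next
  case (fwd x y w c)
  then obtain c' where w1: "walk_cost E w y c'" and "c' \<le> 2 * c" by blast
  have w2: "walk_cost E y x 2" using fwd(1) by (rule walk_edge_bwd)
  have "walk_cost E w x (c' + 2)" by (rule walk_append[OF w1 w2])
  then show ?case using \<open>c' \<le> 2 * c\<close> by (intro exI[of _ "c' + 2"]) simp
next
  case (bwd y x w c)
  then obtain c' where w1: "walk_cost E w y c'" and "c' \<le> 2 * c" by blast
  have w2: "walk_cost E y x 1" using bwd(1) by (rule walk_edge_fwd)
  have "walk_cost E w x (c' + 1)" by (rule walk_append[OF w1 w2])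
  then show ?case using \<open>c' \<le> 2 * c\<close> by (intro exI[of _ "c' + 1"]) simp
qed

lemma conn_walk: "(x, y) \<in> (E \<union> E\<inverse>)\<^sup>* \<Longrightarrow> \<exists>c. walk_cost E x y c"
proof (induction rule: rtrancl_induct)
  case base show ?case by (rule exI[of _ 0]) (simp add: walk_cost.nil)
next
  case (step y z)
  then obtain c where c: "walk_cost E x y c" by blast
  from step(2) show ?case
  proof
    assume "(y, z) \<in> E"
    then have "walk_cost E x z (c + 1)" using c walk_append walk_edge_fwd by metis
    then show ?thesis by blast
  next
    assume "(y, z) \<in> E\<inverse>"
    then have "walk_cost E x z (c + 2)" using c walk_append walk_edge_bwd by (metis converseD)
    then show ?thesis by blast
  qed
qed

lemma ddist_walk: "walk_cost E x y c \<Longrightarrow> walk_cost E x y (ddist E x y) \<and> ddist E x y \<le> c"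
proof -
  assume w: "walk_cost E x y c"
  have "walk_cost E x y (LEAST c. walk_cost E x y c)" by (rule LeastI[of "walk_cost E x y", OF w])
  moreover have "(LEAST c. walk_cost E x y c) \<le> c" by (rule Least_le[of "walk_cost E x y", OF w])
  ultimately show ?thesis unfolding ddist_def by blast
qed

lemma ddist_le: "walk_cost E x y c \<Longrightarrow> ddist E x y \<le> c"
  using ddist_walk by (rule conjunct2)

lemma ddist_wk: "walk_cost E x y c \<Longrightarrow> walk_cost E x y (ddist E x y)"
  using ddist_walk by (rule conjunct1)

lemma ddist_refl: "ddist E x x = 0"
proof -
  have "ddist E x x \<le> 0" using ddist_walk[OF walk_cost.nil[of E x]] by (rule conjunct2)
  then show ?thesis by (rule le_0_eq[THEN iffD1])
qed

lemma conn_walk2: "graph_connected V E \<Longrightarrow> x \<in> V \<Longrightarrow> y \<in> V \<Longrightarrow> walk_cost E x y (ddist E x y)"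
proof -
  assume h: "graph_connected V E" "x \<in> V" "y \<in> V"
  have "\<forall>x\<in>V. \<forall>y\<in>V. (x, y) \<in> (E \<union> E\<inverse>)\<^sup>*" using h(1) unfolding graph_connected_def .
  then have "(x, y) \<in> (E \<union> E\<inverse>)\<^sup>*" using h(2,3) by simp
  then obtain c where "walk_cost E x y c" using conn_walk[of x y E] by blast
  then show ?thesis by (rule ddist_wk)
qed

lemma ddist_tri: "graph_connected V E \<Longrightarrow> x \<in> V \<Longrightarrow> y \<in> V \<Longrightarrow> z \<in> V \<Longrightarrow>
   ddist E x z \<le> ddist E x y + ddist E y z"
proof -
  assume h: "graph_connected V E" "x \<in> V" "y \<in> V" "z \<in> V"
  have "walk_cost E x z (ddist E x y + ddist E y z)"
    by (rule walk_append[OF conn_walk2[OF h(1,2,3)] conn_walk2[OF h(1,3,4)]])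
  then show ?thesis by (rule ddist_le)
qed

lemma ddist_rev: "graph_connected V E \<Longrightarrow> x \<in> V \<Longrightarrow> y \<in> V \<Longrightarrow> ddist E x y \<le> 2 * ddist E y x"
proof -
  assume h: "graph_connected V E" "x \<in> V" "y \<in> V"
  obtain c' where c': "walk_cost E x y c'" "c' \<le> 2 * ddist E y x"
    using walk_rev[OF conn_walk2[OF h(1,3,2)]] by blast
  have "ddist E x y \<le> c'" by (rule ddist_le[OF c'(1)])
  then show ?thesis using c'(2) by linarith
qed

lemma ddist_edge: "(a, b) \<in> E \<Longrightarrow> ddist E a b \<le> 1 \<and> ddist E b a \<le> 2"
proof -
  assume e: "(a, b) \<in> E"
  have "ddist E a b \<le> 1" by (rule ddist_le[OF walk_edge_fwd[OF e]])
  moreover have "ddist E b a \<le> 2" by (rule ddist_le[OF walk_edge_bwd[OF e]])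
  ultimately show ?thesis by blast
qed

lemma walk_lower:
  assumes "walk_cost E u w c" "\<forall>(a, b)\<in>E. D a \<le> D b + 1 \<and> D b \<le> D a + (2::nat)" "D w = 0"
  shows "D u \<le> c"
  using assms
proof (induction rule: walk_cost.induct)
  case (nil x) then show ?case by simp
next
  case (fwd x y w c)
  have "D x \<le> D y + 1" using fwd.prems(1) fwd.hyps(1) by blast
  then show ?case using fwd.IH fwd.prems by linarith
next
  case (bwd y x w c)
  have "D x \<le> D y + 2" using bwd.prems(1) bwd.hyps(1) by blast
  then show ?case using bwd.IH bwd.prems by linarith
qed

lemma minimizer:
  assumes conn: "graph_connected V E" and I3: "card I = 3" and j: "j1 \<in> I" "j2 \<in> I" "j1 \<noteq> j2"
    and zj: "z j1 = v" "z j2 = v" and v: "v \<in> V" and y: "y \<in> V" and zV: "\<forall>i\<in>I. z i \<in> V"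
  shows "(\<Sum>i\<in>I. ddist E v (z i)) \<le> (\<Sum>i\<in>I. ddist E y (z i))"
proof -
  have fin: "finite I" using I3 card.infinite by fastforce
  have "card (I - {j1, j2}) = 1" using I3 j fin by (simp add: card_Diff_subset)
  then obtain k where k: "I - {j1, j2} = {k}" by (rule card_1_singletonE)
  then have I: "I = {j1, j2, k}" and kn: "k \<noteq> j1" "k \<noteq> j2" using j by auto
  have zk: "z k \<in> V" using zV I by auto
  have "ddist E v (z k) \<le> ddist E v y + ddist E y (z k)" using ddist_tri[OF conn v y zk] .
  also have "\<dots> \<le> 2 * ddist E y v + ddist E y (z k)" using ddist_rev[OF conn v y] by simp
  finally have *: "ddist E v (z k) \<le> 2 * ddist E y v + ddist E y (z k)" .
  have "(\<Sum>i\<in>I. ddist E v (z i)) = ddist E v (z k)" using I kn j(3) zj by (simp add: ddist_refl)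
  moreover have "(\<Sum>i\<in>I. ddist E y (z i)) = 2 * ddist E y v + ddist E y (z k)" using I kn j(3) zj by simp
  ultimately show ?thesis using * by simp
qed

lemma cat0_facts: "cat0_planar_graph V E \<Longrightarrow> V \<noteq> {} \<and> finite V \<and> E \<subseteq> V \<times> V \<and> graph_connected V E"
proof -
  assume "cat0_planar_graph V E"
  then obtain pos gam where "cat0_plane_graph V E pos gam" unfolding cat0_planar_graph_def by blast
  then show ?thesis unfolding cat0_plane_graph_def by (elim conjE) (intro conjI)
qed

lemma two_elems: "2 \<le> card S \<Longrightarrow> \<exists>a b. a \<in> S \<and> b \<in> S \<and> a \<noteq> b"
proof -
  assume h: "2 \<le> card S"
  then obtain a T where "S = insert a T" "a \<notin> T" "1 \<le> card T" "finite T"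
    using card_le_Suc_iff[of 1 S] by auto
  moreover then obtain b where "b \<in> T" using card_le_Suc_iff[of 0 T] by auto
  ultimately show ?thesis by blast
qed

definition rr1 :: "'a \<Rightarrow> ('a + 'b) \<Rightarrow> 'a" where
  "rr1 v' u = (case u of Inl a \<Rightarrow> a | Inr _ \<Rightarrow> v')"

definition rr2 :: "'b \<Rightarrow> ('a + 'b) \<Rightarrow> 'b" where
  "rr2 v'' u = (case u of Inl _ \<Rightarrow> v'' | Inr y \<Rightarrow> y)"

lemma rr_simps[simp]:
  "rr1 v' (Inl a) = a" "rr1 v' (Inr y) = v'" "rr2 v'' (Inl a) = v''" "rr2 v'' (Inr y) = y"
  "rr1 v' (glue_map v' v'' y) = v'" "rr2 v'' (glue_map v' v'' y) = y"
  by (auto simp: rr1_def rr2_def glue_map_def)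

lemma gm_in: "y \<in> V'' \<Longrightarrow> v' \<in> V' \<Longrightarrow> glue_map v' v'' y \<in> glue_V V' V'' v''"
  by (auto simp: glue_map_def glue_V_def)

lemma rr_in: "u \<in> glue_V V' V'' v'' \<Longrightarrow> v' \<in> V' \<Longrightarrow> v'' \<in> V'' \<Longrightarrow>
    rr1 v' u \<in> V' \<and> rr2 v'' u \<in> V''"
  unfolding glue_V_def by (cases u) auto

lemma glueE_cases:
  "(u, w) \<in> glue_E E' E'' v' v'' \<Longrightarrow>
    ((rr1 v' u, rr1 v' w) \<in> E' \<and> rr2 v'' u = v'' \<and> rr2 v'' w = v'') \<or>
    (rr1 v' u = v' \<and> rr1 v' w = v' \<and> (rr2 v'' u, rr2 v'' w) \<in> E'')"
proof -
  assume h: "(u, w) \<in> glue_E E' E'' v' v''"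
  then have "(u, w) \<in> (\<lambda>(a, b). (Inl a, Inl b)) ` E' \<or>
     (u, w) \<in> (\<lambda>(a, b). (glue_map v' v'' a, glue_map v' v'' b)) ` E''"
    unfolding glue_E_def by blast
  then show ?thesis
  proof
    assume "(u, w) \<in> (\<lambda>(a, b). (Inl a, Inl b)) ` E'"
    then obtain p where p: "p \<in> E'" "(u, w) = (\<lambda>(a, b). (Inl a, Inl b)) p" by (rule imageE)
    obtain a b where "p = (a, b)" by (cases p)
    then show ?thesis using p by simp
  next
    assume "(u, w) \<in> (\<lambda>(a, b). (glue_map v' v'' a, glue_map v' v'' b)) ` E''"
    then obtain p where p: "p \<in> E''" "(u, w) = (\<lambda>(a, b). (glue_map v' v'' a, glue_map v' v'' b)) p" by (rule imageE)
    obtain a b where "p = (a, b)" by (cases p)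
    then show ?thesis using p by simp
  qed
qed

lemma glueE_sub:
  "E' \<subseteq> V' \<times> V' \<Longrightarrow> E'' \<subseteq> V'' \<times> V'' \<Longrightarrow> v' \<in> V' \<Longrightarrow> (u, w) \<in> glue_E E' E'' v' v'' \<Longrightarrow>
    u \<in> glue_V V' V'' v'' \<and> w \<in> glue_V V' V'' v''"
proof -
  assume h: "E' \<subseteq> V' \<times> V'" "E'' \<subseteq> V'' \<times> V''" "v' \<in> V'" "(u, w) \<in> glue_E E' E'' v' v''"
  have "(u, w) \<in> (\<lambda>(a, b). (Inl a, Inl b)) ` E' \<or>
     (u, w) \<in> (\<lambda>(a, b). (glue_map v' v'' a, glue_map v' v'' b)) ` E''"
    using h(4) unfolding glue_E_def by blast
  then consider (1) a b where "(a, b) \<in> E'" "u = Inl a" "w = Inl b"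
    | (2) a b where "(a, b) \<in> E''" "u = glue_map v' v'' a" "w = glue_map v' v'' b"
  proof
    assume "(u, w) \<in> (\<lambda>(a, b). (Inl a, Inl b)) ` E'"
    then obtain p where p: "p \<in> E'" "(u, w) = (\<lambda>(a, b). (Inl a, Inl b)) p" by (rule imageE)
    obtain a b where "p = (a, b)" by (cases p)
    then show thesis using p that(1)[of a b] by simp
  next
    assume "(u, w) \<in> (\<lambda>(a, b). (glue_map v' v'' a, glue_map v' v'' b)) ` E''"
    then obtain p where p: "p \<in> E''" "(u, w) = (\<lambda>(a, b). (glue_map v' v'' a, glue_map v' v'' b)) p" by (rule imageE)
    obtain a b where "p = (a, b)" by (cases p)
    then show thesis using p that(2)[of a b] by simp
  qed
  then show ?thesis
  proof cases
    case 1
    then have "a \<in> V'" "b \<in> V'" using h(1) by blast+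
    then show ?thesis using 1 by (simp add: glue_V_def)
  next
    case 2
    then have "a \<in> V''" "b \<in> V''" using h(2) by blast+
    then show ?thesis using 2 gm_in h(3) by metis
  qed
qed

lemma walk_inl: "walk_cost E' a b c \<Longrightarrow> walk_cost (glue_E E' E'' v' v'') (Inl a) (Inl b) c"
proof (induction rule: walk_cost.induct)
  case (nil x) then show ?case by (rule walk_cost.nil)
next
  case (fwd x y w c)
  have "(Inl x, Inl y) \<in> (\<lambda>(a, b). (Inl a, Inl b)) ` E'" using fwd(1) by (rule rev_image_eqI) simp
  then have "(Inl x, Inl y) \<in> glue_E E' E'' v' v''" unfolding glue_E_def by (rule UnI1)
  then show ?case using fwd(3) by (rule walk_cost.fwd)
next
  case (bwd y x w c)
  have "(Inl y, Inl x) \<in> (\<lambda>(a, b). (Inl a, Inl b)) ` E'" using bwd(1) by (rule rev_image_eqI) simp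
  then have "(Inl y, Inl x) \<in> glue_E E' E'' v' v''" unfolding glue_E_def by (rule UnI1)
  then show ?case using bwd(3) by (rule walk_cost.bwd)
qed

lemma walk_gm: "walk_cost E'' a b c \<Longrightarrow>
   walk_cost (glue_E E' E'' v' v'') (glue_map v' v'' a) (glue_map v' v'' b) c"
proof (induction rule: walk_cost.induct)
  case (nil x) then show ?case by (rule walk_cost.nil)
next
  case (fwd x y w c)
  have "(glue_map v' v'' x, glue_map v' v'' y) \<in> (\<lambda>(a, b). (glue_map v' v'' a, glue_map v' v'' b)) ` E''" using fwd(1) by (rule rev_image_eqI) simp
  then have "(glue_map v' v'' x, glue_map v' v'' y) \<in> glue_E E' E'' v' v''" unfolding glue_E_def by (rule UnI2)
  then show ?case using fwd(3) by (rule walk_cost.fwd)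
next
  case (bwd y x w c)
  have "(glue_map v' v'' y, glue_map v' v'' x) \<in> (\<lambda>(a, b). (glue_map v' v'' a, glue_map v' v'' b)) ` E''" using bwd(1) by (rule rev_image_eqI) simp
  then have "(glue_map v' v'' y, glue_map v' v'' x) \<in> glue_E E' E'' v' v''" unfolding glue_E_def by (rule UnI2)
  then show ?case using bwd(3) by (rule walk_cost.bwd)
qed

lemma glue_dist:
  assumes E': "E' \<subseteq> V' \<times> V'" and E'': "E'' \<subseteq> V'' \<times> V''"
    and c': "graph_connected V' E'" and c'': "graph_connected V'' E''"
    and v': "v' \<in> V'" and v'': "v'' \<in> V''"
    and u: "u \<in> glue_V V' V'' v''" and w: "w \<in> glue_V V' V'' v''"
  shows "ddist (glue_E E' E'' v' v'') u w =
     ddist E' (rr1 v' u) (rr1 v' w) + ddist E'' (rr2 v'' u) (rr2 v'' w)"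
proof -
  let ?G = "glue_E E' E'' v' v''"
  let ?D = "\<lambda>x. ddist E' (rr1 v' x) (rr1 v' w) + ddist E'' (rr2 v'' x) (rr2 v'' w)"
  have gv'': "glue_map v' v'' v'' = Inl v'" by (simp add: glue_map_def)
  have gy: "y \<noteq> v'' \<Longrightarrow> glue_map v' v'' y = Inr y" for y by (simp add: glue_map_def)
  have ex: "walk_cost ?G u w (?D u)"
  proof (cases u)
    case (Inl a)
    then have a: "a \<in> V'" using u by (auto simp: glue_V_def)
    show ?thesis
    proof (cases w)
      case (Inl b)
      then have b: "b \<in> V'" using w by (auto simp: glue_V_def)
      show ?thesis using walk_inl[OF conn_walk2[OF c' a b], of E'' v' v''] Inl \<open>u = Inl a\<close>
        by (simp add: ddist_refl)
    next
      case (Inr y)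
      then have y: "y \<in> V''" "y \<noteq> v''" using w by (auto simp: glue_V_def)
      have 1: "walk_cost ?G (Inl a) (Inl v') (ddist E' a v')"
        using walk_inl[OF conn_walk2[OF c' a v']] .
      have 2: "walk_cost ?G (Inl v') (Inr y) (ddist E'' v'' y)"
        using walk_gm[OF conn_walk2[OF c'' v'' y(1)], where E'=E' and v'=v' and v''=v''] gv'' gy[OF y(2)] by simp
      show ?thesis using walk_append[OF 1 2] Inr \<open>u = Inl a\<close> by simp
    qed
  next
    case (Inr x)
    then have x: "x \<in> V''" "x \<noteq> v''" using u by (auto simp: glue_V_def)
    show ?thesis
    proof (cases w)
      case (Inl b)
      then have b: "b \<in> V'" using w by (auto simp: glue_V_def)
      have 1: "walk_cost ?G (Inr x) (Inl v') (ddist E'' x v'')"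
        using walk_gm[OF conn_walk2[OF c'' x(1) v''], where E'=E' and v'=v' and v''=v''] gv'' gy[OF x(2)] by simp
      have 2: "walk_cost ?G (Inl v') (Inl b) (ddist E' v' b)"
        using walk_inl[OF conn_walk2[OF c' v' b]] .
      show ?thesis using walk_append[OF 1 2] Inl \<open>u = Inr x\<close> by (simp add: add.commute)
    next
      case (Inr y)
      then have y: "y \<in> V''" "y \<noteq> v''" using w by (auto simp: glue_V_def)
      show ?thesis using walk_gm[OF conn_walk2[OF c'' x(1) y(1)], where E'=E' and v'=v' and v''=v''] gy[OF x(2)] gy[OF y(2)]
          Inr \<open>u = Inr x\<close> by (simp add: ddist_refl)
    qed
  qed
  then have up: "ddist ?G u w \<le> ?D u" and wk: "walk_cost ?G u w (ddist ?G u w)"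
    using ddist_le[OF ex] ddist_wk[OF ex] by blast+
  have w1: "rr1 v' w \<in> V'" and w2: "rr2 v'' w \<in> V''" using rr_in[OF w v' v''] by (rule conjunct1, rule conjunct2)
  have edge: "\<forall>(a, b)\<in>?G. ?D a \<le> ?D b + 1 \<and> ?D b \<le> ?D a + 2"
  proof (intro ballI, clarify)
    fix a b assume ab: "(a, b) \<in> ?G"
    have ag: "a \<in> glue_V V' V'' v''" and bg: "b \<in> glue_V V' V'' v''"
      using glueE_sub[OF E' E'' v' ab] by (rule conjunct1, rule conjunct2)
    have a1: "rr1 v' a \<in> V'" and a2: "rr2 v'' a \<in> V''"
      using rr_in[OF ag v' v''] by (rule conjunct1, rule conjunct2)
    have b1: "rr1 v' b \<in> V'" and b2: "rr2 v'' b \<in> V''"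
      using rr_in[OF bg v' v''] by (rule conjunct1, rule conjunct2)
    from glueE_cases[OF ab] show "?D a \<le> ?D b + 1 \<and> ?D b \<le> ?D a + 2"
    proof
      assume h: "(rr1 v' a, rr1 v' b) \<in> E' \<and> rr2 v'' a = v'' \<and> rr2 v'' b = v''"
      have t1: "ddist E' (rr1 v' a) (rr1 v' w) \<le> ddist E' (rr1 v' a) (rr1 v' b) + ddist E' (rr1 v' b) (rr1 v' w)"
        using ddist_tri[OF c' a1 b1 w1] .
      have t2: "ddist E' (rr1 v' b) (rr1 v' w) \<le> ddist E' (rr1 v' b) (rr1 v' a) + ddist E' (rr1 v' a) (rr1 v' w)"
        using ddist_tri[OF c' b1 a1 w1] .
      show ?thesis using t1 t2 ddist_edge[of "rr1 v' a" "rr1 v' b" E'] h by simp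
    next
      assume h: "rr1 v' a = v' \<and> rr1 v' b = v' \<and> (rr2 v'' a, rr2 v'' b) \<in> E''"
      have t1: "ddist E'' (rr2 v'' a) (rr2 v'' w) \<le> ddist E'' (rr2 v'' a) (rr2 v'' b) + ddist E'' (rr2 v'' b) (rr2 v'' w)"
        using ddist_tri[OF c'' a2 b2 w2] .
      have t2: "ddist E'' (rr2 v'' b) (rr2 v'' w) \<le> ddist E'' (rr2 v'' b) (rr2 v'' a) + ddist E'' (rr2 v'' a) (rr2 v'' w)"
        using ddist_tri[OF c'' b2 a2 w2] .
      show ?thesis using t1 t2 ddist_edge[of "rr2 v'' a" "rr2 v'' b" E''] h by simp
    qed
  qed
  have "?D u \<le> ddist ?G u w"
    by (rule walk_lower[OF wk edge]) (simp add: ddist_refl)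
  then show ?thesis using up by simp
qed

theorem proposition12p1:
  fixes V' :: "'a set" and E' :: "('a \<times> 'a) set" and z' :: "nat \<Rightarrow> 'a" and v' :: 'a
    and V'' :: "'b set" and E'' :: "('b \<times> 'b) set" and z'' :: "nat \<Rightarrow> 'b" and v'' :: 'b
    and n p q r s :: nat
  assumes Q': "cat0_planar_graph V' E'" and lab': "\<forall>i\<in>{1..n}. z' i \<in> V'"
    and Q'': "cat0_planar_graph V'' E''" and lab'': "\<forall>i\<in>{1..n}. z'' i \<in> V''"
    and v': "v' \<in> V'" and v'': "v'' \<in> V''"
    and pq: "proper_cyc_interval n p q" and rs: "proper_cyc_interval n r s"
    and cover: "cyc_interval n p q \<union> cyc_interval n r s = {1..n}"
    and at_v': "\<forall>i\<in>cyc_interval n p q. z' i = v'"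
    and at_v'': "\<forall>i\<in>cyc_interval n r s. z'' i = v''"
  shows "\<forall>I. I \<subseteq> {1..n} \<and> card I = 3 \<longrightarrow>
           trop_pluecker (glue_V V' V'' v'') (glue_E E' E'' v' v'')
             (\<lambda>i. if i \<in> cyc_interval n r s then Inl (z' i) else glue_map v' v'' (z'' i)) I
           = trop_pluecker V' E' z' I + trop_pluecker V'' E'' z'' I"
proof (intro allI impI)
  fix I :: "nat set"
  assume hI: "I \<subseteq> {1..n} \<and> card I = 3"
  let ?R = "cyc_interval n r s"
  let ?P = "cyc_interval n p q"
  let ?G = "glue_E E' E'' v' v''"
  let ?GV = "glue_V V' V'' v''"
  let ?Z = "\<lambda>i. if i \<in> ?R then Inl (z' i) else glue_map v' v'' (z'' i)"
  have Isub: "I \<subseteq> {1..n}" and I3: "card I = 3" using hI by blast+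
  have finI: "finite I" using I3 card.infinite by fastforce
  have F1: "V' \<noteq> {} \<and> finite V' \<and> E' \<subseteq> V' \<times> V' \<and> graph_connected V' E'" by (rule cat0_facts[OF Q'])
  have F2: "V'' \<noteq> {} \<and> finite V'' \<and> E'' \<subseteq> V'' \<times> V'' \<and> graph_connected V'' E''" by (rule cat0_facts[OF Q''])
  have fV': "finite V'" and E's: "E' \<subseteq> V' \<times> V'" and c': "graph_connected V' E'" using F1 by blast+
  have fV'': "finite V''" and E''s: "E'' \<subseteq> V'' \<times> V''" and c'': "graph_connected V'' E''" using F2 by blast+
  have zi: "?Z i \<in> ?GV \<and> rr1 v' (?Z i) = z' i \<and> rr2 v'' (?Z i) = z'' i" if i: "i \<in> I" for i
  proof -
    have i1: "i \<in> {1..n}" using Isub i by blast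
    show ?thesis
    proof (cases "i \<in> ?R")
      case True
      then have "z'' i = v''" using at_v'' by blast
      moreover have "z' i \<in> V'" using lab' i1 by blast
      ultimately show ?thesis using True by (simp add: glue_V_def)
    next
      case False
      then have "i \<in> ?P" using cover i1 by blast
      then have "z' i = v'" using at_v' by blast
      moreover have "z'' i \<in> V''" using lab'' i1 by blast
      moreover have "glue_map v' v'' (z'' i) \<in> ?GV" using gm_in[OF \<open>z'' i \<in> V''\<close> v'] .
      ultimately show ?thesis using False by simp
    qed
  qed
  define f1 where "f1 x = (\<Sum>i\<in>I. ddist E' x (z' i))" for x
  define f2 where "f2 y = (\<Sum>i\<in>I. ddist E'' y (z'' i))" for y
  have FX: "(\<Sum>i\<in>I. ddist ?G x (?Z i)) = f1 (rr1 v' x) + f2 (rr2 v'' x)" if x: "x \<in> ?GV" for x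
  proof -
    have "(\<Sum>i\<in>I. ddist ?G x (?Z i)) = (\<Sum>i\<in>I. ddist E' (rr1 v' x) (z' i) + ddist E'' (rr2 v'' x) (z'' i))"
    proof (rule sum.cong[OF refl])
      fix i assume i: "i \<in> I"
      have zz: "?Z i \<in> ?GV" "rr1 v' (?Z i) = z' i" "rr2 v'' (?Z i) = z'' i" using zi[OF i] by blast+
      show "ddist ?G x (?Z i) = ddist E' (rr1 v' x) (z' i) + ddist E'' (rr2 v'' x) (z'' i)"
        using glue_dist[OF E's E''s c' c'' v' v'' x zz(1)] zz(2,3) by simp
    qed
    also have "\<dots> = f1 (rr1 v' x) + f2 (rr2 v'' x)" unfolding f1_def f2_def by (rule sum.distrib)
    finally show ?thesis .
  qed
  define A where "A = Min ((\<lambda>x. real (f1 x)) ` V')"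
  define B where "B = Min ((\<lambda>x. real (f2 x)) ` V'')"
  have finA: "finite ((\<lambda>x. real (f1 x)) ` V')" using fV' by simp
  have finB: "finite ((\<lambda>x. real (f2 x)) ` V'')" using fV'' by simp
  have neA: "(\<lambda>x. real (f1 x)) ` V' \<noteq> {}" using v' by blast
  have neB: "(\<lambda>x. real (f2 x)) ` V'' \<noteq> {}" using v'' by blast
  have A_le: "A \<le> real (f1 x)" if "x \<in> V'" for x
    unfolding A_def using finA that by (intro Min_le) auto
  have B_le: "B \<le> real (f2 x)" if "x \<in> V''" for x
    unfolding B_def using finB that by (intro Min_le) auto
  have Ain: "A \<in> (\<lambda>x. real (f1 x)) ` V'" unfolding A_def by (rule Min_in[OF finA neA])
  then obtain a where a0: "a \<in> V'" "A = real (f1 a)" by (rule imageE)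
  have a: "a \<in> V'" "real (f1 a) = A" using a0 by simp_all
  have Bin: "B \<in> (\<lambda>x. real (f2 x)) ` V''" unfolding B_def by (rule Min_in[OF finB neB])
  then obtain b where b0: "b \<in> V''" "B = real (f2 b)" by (rule imageE)
  have b: "b \<in> V''" "real (f2 b) = B" using b0 by simp_all
  have zV': "\<forall>i\<in>I. z' i \<in> V'" using lab' Isub by blast
  have zV'': "\<forall>i\<in>I. z'' i \<in> V''" using lab'' Isub by blast
  have key: "real (f1 v') = A \<or> real (f2 v'') = B"
  proof -
    have "card I = card (I \<inter> ?R) + card (I - ?R)" by (rule card_Int_Diff[OF finI])
    then have "2 \<le> card (I \<inter> ?R) \<or> 2 \<le> card (I - ?R)" using I3 by linarith
    then show ?thesis
    proof
      assume "2 \<le> card (I \<inter> ?R)"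
      then have "\<exists>a b. a \<in> I \<inter> ?R \<and> b \<in> I \<inter> ?R \<and> a \<noteq> b" by (rule two_elems)
      then obtain j1 j2 where j: "j1 \<in> I \<inter> ?R" "j2 \<in> I \<inter> ?R" "j1 \<noteq> j2" by blast
      have "f2 v'' \<le> f2 b" unfolding f2_def
        by (rule minimizer[OF c'' I3 _ _ j(3) _ _ v'' b(1) zV'']) (use j at_v'' in blast)+
      then have "real (f2 v'') \<le> B" using b(2) by simp
      then show ?thesis using B_le[OF v''] by simp
    next
      assume "2 \<le> card (I - ?R)"
      then have "\<exists>a b. a \<in> I - ?R \<and> b \<in> I - ?R \<and> a \<noteq> b" by (rule two_elems)
      then obtain j1 j2 where j: "j1 \<in> I - ?R" "j2 \<in> I - ?R" "j1 \<noteq> j2" by blast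
      have jP: "j1 \<in> ?P" "j2 \<in> ?P" using j Isub cover by blast+
      have "f1 v' \<le> f1 a" unfolding f1_def
        by (rule minimizer[OF c' I3 _ _ j(3) _ _ v' a(1) zV']) (use j jP at_v' in blast)+
      then have "real (f1 v') \<le> A" using a(2) by simp
      then show ?thesis using A_le[OF v'] by simp
    qed
  qed
  have finGV: "finite ?GV" unfolding glue_V_def using fV' fV'' by simp
  have MinG: "Min ((\<lambda>x. real (\<Sum>i\<in>I. ddist ?G x (?Z i))) ` ?GV) = A + B"
  proof (rule Min_eqI)
    show "finite ((\<lambda>x. real (\<Sum>i\<in>I. ddist ?G x (?Z i))) ` ?GV)" using finGV by simp
  next
    fix y assume "y \<in> (\<lambda>x. real (\<Sum>i\<in>I. ddist ?G x (?Z i))) ` ?GV"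
    then obtain x where x: "x \<in> ?GV" and y: "y = real (\<Sum>i\<in>I. ddist ?G x (?Z i))" by blast
    have r: "rr1 v' x \<in> V' \<and> rr2 v'' x \<in> V''" by (rule rr_in[OF x v' v''])
    have "A + B \<le> real (f1 (rr1 v' x)) + real (f2 (rr2 v'' x))"
      using A_le[OF conjunct1[OF r]] B_le[OF conjunct2[OF r]] by linarith
    then show "A + B \<le> y" using y FX[OF x] by simp
  next
    show "A + B \<in> (\<lambda>x. real (\<Sum>i\<in>I. ddist ?G x (?Z i))) ` ?GV"
      using key
    proof
      assume h: "real (f1 v') = A"
      have gb: "glue_map v' v'' b \<in> ?GV" by (rule gm_in[OF b(1) v'])
      have "real (\<Sum>i\<in>I. ddist ?G (glue_map v' v'' b) (?Z i)) = A + B"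
        using FX[OF gb] h b(2) by simp
      then show ?thesis by (rule rev_image_eqI[OF gb sym])
    next
      assume h: "real (f2 v'') = B"
      have ga: "Inl a \<in> ?GV" using a(1) by (simp add: glue_V_def)
      have "real (\<Sum>i\<in>I. ddist ?G (Inl a) (?Z i)) = A + B"
        using FX[OF ga] h a(2) by simp
      then show ?thesis by (rule rev_image_eqI[OF ga sym])
    qed
  qed
  have T1: "trop_pluecker V' E' z' I = - (1/3) * A" unfolding trop_pluecker_def A_def f1_def by simp
  have T2: "trop_pluecker V'' E'' z'' I = - (1/3) * B" unfolding trop_pluecker_def B_def f2_def by simp
  have T: "trop_pluecker ?GV ?G ?Z I = - (1/3) * (A + B)" unfolding trop_pluecker_def using MinG by simp
  show "trop_pluecker ?GV ?G ?Z I = trop_pluecker V' E' z' I + trop_pluecker V'' E'' z'' I"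
    unfolding T T1 T2 by (simp add: field_simps)
qed

end
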